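(* Let $s>0$ and let $c$ be a constant. Suppose $g\in C^1[s,\infty)$ satisfies $$g'(t)=-g(t)\Big(1+\frac1t\Big)+\frac1t\int_s^t g(\xi)\,d\xi+\frac ct,\qquad t\in[s,\infty).$$ Then for all $t\ge s$, $$g(t)=g'(s)\,s^2\,e^{s}\,I_2(t,s)+g(s),$$ where $g'(s)=c\,s^{-1}-(1+s^{-1})\,g(s)$.
   Context: $I_2(t,s)=\int_s^t \frac{e^{-\xi}}{\xi^2}\,d\xi$. *)

theory Defs
  imports "HOL-Analysis.Analysis"
begin

definition I2 :: "real \<Rightarrow> real \<Rightarrow> real" where
  "I2 t s = integral {s..t} (\<lambda>\<xi>. exp (- \<xi>) / \<xi>^2)"

end

theory Submission
  imports Defs
begin

theorem lemma3:
  fixes g g' :: "real \<Rightarrow> real" and s c :: real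
  assumes s_pos: "s > 0"
    and deriv: "\<And>t. t \<ge> s \<Longrightarrow> (g has_real_derivative g' t) (at t within {s..})"
    and cont_deriv: "continuous_on {s..} g'"
    and ode: "\<And>t. t \<ge> s \<Longrightarrow>
       g' t = - g t * (1 + 1 / t) + (1 / t) * integral {s..t} g + c / t"
  shows "(\<forall>t\<ge>s. g t = g' s * s^2 * exp s * I2 t s + g s)
         \<and> g' s = c / s - (1 + 1 / s) * g s"
proof -
  have gs: "g' s = c / s - (1 + 1 / s) * g s"
    using ode[of s] by (simp add: algebra_simps)
  define h where "h t = t * exp t * (c - (t+1) * g t + integral {s..t} g)" for t
  have hform: "h t = t^2 * exp t * g' t" if "t \<ge> s" for t
  proof -
    have "t > 0" using that s_pos by linarith
    then have "t * g' t = c - (t+1) * g t + integral {s..t} g"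
      using ode[OF that] by (simp add: field_simps)
    then have "h t = t * exp t * (t * g' t)" unfolding h_def by simp
    then show ?thesis by (simp add: power2_eq_square)
  qed
  have key: "g' t = g' s * s^2 * exp s * (exp (-t) / t^2)" if "t \<ge> s" for t
  proof -
    let ?S = "{s..t}"
    have dg: "(g has_real_derivative g' x) (at x within ?S)" if "x \<in> ?S" for x
      using deriv[of x] that by (auto intro: has_field_derivative_subset)
    have contg: "continuous_on ?S g"
      using dg by (meson DERIV_continuous continuous_on_eq_continuous_within)
    have dG: "((\<lambda>u. integral {s..u} g) has_real_derivative g x) (at x within ?S)" if "x \<in> ?S" for x
      using integral_has_real_derivative[OF contg that] .
    have dh: "(h has_real_derivative 0) (at x within ?S)" if x: "x \<in> ?S" for x
    proof -
      have xeq: "x * g' x = c - (x+1) * g x + integral {s..x} g"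
        using ode[of x] x s_pos by (simp add: field_simps)
      have "(h has_real_derivative
          ((1 * exp x + x * exp x) * (c - (x+1) * g x + integral {s..x} g)
           + x * exp x * (- ((1) * g x + (x+1) * g' x) + g x))) (at x within ?S)"
        unfolding h_def[abs_def]
        by (intro derivative_eq_intros; (rule dg[OF x] dG[OF x])?) auto
      moreover have "(1 * exp x + x * exp x) * (c - (x+1) * g x + integral {s..x} g)
           + x * exp x * (- ((1) * g x + (x+1) * g' x) + g x) = 0"
        unfolding xeq[symmetric] by (simp add: algebra_simps)
      ultimately show ?thesis by simp
    qed
    obtain k where k: "\<forall>x\<in>?S. h x = k"
      using has_field_derivative_zero_constant[of ?S h] dh by auto
    have "h t = h s" using k that by auto
    then have "t^2 * exp t * g' t = s^2 * exp s * g' s"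
      using hform that by auto
    moreover have "t > 0" using that s_pos by linarith
    ultimately show ?thesis by (simp add: field_simps exp_minus)
  qed
  have main: "g t = g' s * s^2 * exp s * I2 t s + g s" if "t \<ge> s" for t
  proof -
    have "(g' has_integral g t - g s) {s..t}"
      using that
      by (intro fundamental_theorem_of_calculus)
         (auto simp: has_real_derivative_iff_has_vector_derivative[symmetric]
               intro: has_field_derivative_subset[OF deriv])
    then have "((\<lambda>x. g' s * s^2 * exp s * (exp (-x) / x^2)) has_integral g t - g s) {s..t}"
      by (rule has_integral_eq[rotated]) (rule key, simp)
    then have "integral {s..t} (\<lambda>x. g' s * s^2 * exp s * (exp (-x) / x^2)) = g t - g s"
      by (rule integral_unique)
    then show ?thesis unfolding I2_def by (simp only: integral_mult_right)
  qed
  show ?thesis using main gs by blast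
qed

end
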